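(* Let $C\subset V(\tfrac12 H^{0}_{24})$ be a union of spheres such that $\chi_C$ is a perfect coloring of $\tfrac12 H^{0}_{24}$ with parameters $((20+c,\,256-c)(c,\,276-c))$. Then either $c$ is divisible by $3$ or $c\ge 25$.
   Context: $E^{24}$ is the set of binary words of length $24$ with Hamming distance. $\tfrac12 H^{0}_{24}$ is the graph on even-weight words of $E^{24}$, adjacent iff at Hamming distance exactly $2$ (degree $276$). A sphere is a set $S\subset V(\tfrac12 H^{0}_{24})$ consisting of all $24$ words at Hamming distance $1$ from some odd-weight word (its center). For a set $C$ with $\emptyset\ne C\subsetneq V$, $\chi_C$ is a perfect coloring with parameters $((a,b)(c,d))$ if every vertex of $C$ has exactly $a$ neighbours in $C$ and $b$ outside, and every vertex outside $C$ has exactly $c$ neighbours in $C$ and $d$ outside. *)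

theory Defs
  imports Main
begin

text \<open>Binary words of length 24 are represented by their supports: subsets of {..<24}.\<close>

definition word24 :: "nat set \<Rightarrow> bool" where
  "word24 x \<longleftrightarrow> x \<subseteq> {..<24}"

definition hdist :: "nat set \<Rightarrow> nat set \<Rightarrow> nat" where
  "hdist x y = card ((x - y) \<union> (y - x))"

text \<open>Vertex set of the halved 24-cube: even-weight words.\<close>
definition V24 :: "nat set set" where
  "V24 = {x. word24 x \<and> even (card x)}"

definition adj24 :: "nat set \<Rightarrow> nat set \<Rightarrow> bool" where
  "adj24 x y \<longleftrightarrow> hdist x y = 2"

definition nbrs24 :: "nat set \<Rightarrow> nat set set" where
  "nbrs24 x = {y \<in> V24. adj24 x y}"

definition sphere24 :: "nat set \<Rightarrow> nat set set" where
  "sphere24 z = {x. word24 x \<and> hdist x z = 1}"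

definition union_of_spheres :: "nat set set \<Rightarrow> bool" where
  "union_of_spheres C \<longleftrightarrow>
     (\<exists>Z. (\<forall>z\<in>Z. word24 z \<and> odd (card z)) \<and> C = \<Union> (sphere24 ` Z))"

definition perfect_coloring24 :: "nat set set \<Rightarrow> int \<Rightarrow> int \<Rightarrow> int \<Rightarrow> int \<Rightarrow> bool" where
  "perfect_coloring24 C a b c d \<longleftrightarrow>
     C \<noteq> {} \<and> C \<subset> V24 \<and>
     (\<forall>x\<in>C. int (card (nbrs24 x \<inter> C)) = a \<and> int (card (nbrs24 x - C)) = b) \<and>
     (\<forall>x\<in>V24 - C. int (card (nbrs24 x \<inter> C)) = c \<and> int (card (nbrs24 x - C)) = d)"

end

theory Submission
  imports Defs
begin

definition sdf :: "nat set \<Rightarrow> nat set \<Rightarrow> nat set" where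
  "sdf x y = (x - y) \<union> (y - x)"

lemma hdist_sdf: "hdist x y = card (sdf x y)"
  by (simp add: hdist_def sdf_def)

lemma sdf_sym: "sdf x y = sdf y x"
  by (auto simp: sdf_def)

lemma hdist_sym: "hdist x y = hdist y x"
  by (simp add: hdist_sdf sdf_sym)

lemma sphere_eq:
  assumes "word24 z"
  shows "sphere24 z = (\<lambda>i. sdf z {i}) ` {..<24}"
proof
  show "sphere24 z \<subseteq> (\<lambda>i. sdf z {i}) ` {..<24}"
  proof
    fix x assume "x \<in> sphere24 z"
    hence w: "word24 x" and h: "card (sdf x z) = 1" by (auto simp: sphere24_def hdist_sdf)
    then obtain i where i: "sdf x z = {i}" using card_1_singletonE by blast
    have "i \<in> x \<union> z" using i by (auto simp: sdf_def)
    hence "i < 24" using w assms by (auto simp: word24_def)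
    moreover have "x = sdf z {i}" using i[symmetric] by (auto simp: sdf_def)
    ultimately show "x \<in> (\<lambda>i. sdf z {i}) ` {..<24}" by auto
  qed
next
  show "(\<lambda>i. sdf z {i}) ` {..<24} \<subseteq> sphere24 z"
  proof
    fix x assume "x \<in> (\<lambda>i. sdf z {i}) ` {..<24}"
    then obtain i where i: "i < 24" "x = sdf z {i}" by auto
    have "sdf x z = {i}" using i by (auto simp: sdf_def)
    moreover have "word24 x" using i assms by (auto simp: word24_def sdf_def)
    ultimately show "x \<in> sphere24 z" by (simp add: sphere24_def hdist_sdf)
  qed
qed

lemma inj_sdf: "inj_on (\<lambda>i. sdf z {i}) A"
proof (rule inj_onI)
  fix i j assume "sdf z {i} = sdf z {j}"
  hence "i \<in> sdf z {j} \<longleftrightarrow> i \<in> sdf z {i}" by simp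
  thus "i = j" by (auto simp: sdf_def)
qed

lemma card_sphere: "word24 z \<Longrightarrow> card (sphere24 z) = 24"
  by (simp add: sphere_eq card_image inj_sdf)

lemma finite_word: "word24 z \<Longrightarrow> finite z"
  by (auto simp: word24_def intro: finite_subset)

lemma even_sdf:
  assumes "word24 z" "odd (card z)"
  shows "even (card (sdf z {i}))"
proof (cases "i \<in> z")
  case True
  hence "sdf z {i} = z - {i}" by (auto simp: sdf_def)
  moreover have "card z \<ge> 1" using assms by (cases "card z") auto
  ultimately show ?thesis using True assms finite_word[OF assms(1)] by simp
next
  case False
  hence "sdf z {i} = insert i z" by (auto simp: sdf_def)
  thus ?thesis using False assms finite_word[OF assms(1)] by simp
qed

lemma sphere_V:
  assumes "word24 z" "odd (card z)"
  shows "sphere24 z \<subseteq> V24"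
  using assms even_sdf by (auto simp: sphere_eq V24_def word24_def sdf_def)

lemma sphere_adj:
  assumes "word24 z" "odd (card z)" "x \<in> sphere24 z"
  shows "sphere24 z - {x} \<subseteq> nbrs24 x"
proof
  fix y assume y: "y \<in> sphere24 z - {x}"
  obtain i where i: "x = sdf z {i}" using assms by (auto simp: sphere_eq)
  obtain j where j: "y = sdf z {j}" using y assms by (auto simp: sphere_eq)
  have "i \<noteq> j" using i j y by auto
  hence "sdf x y = {i, j}" using i j by (auto simp: sdf_def)
  hence "adj24 x y" using \<open>i \<noteq> j\<close> by (simp add: adj24_def hdist_sdf)
  moreover have "y \<in> V24" using y sphere_V[OF assms(1,2)] by auto
  ultimately show "y \<in> nbrs24 x" by (simp add: nbrs24_def)
qed

lemma sphere_inter: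
  assumes "word24 z" "word24 z'" "z \<noteq> z'"
  shows "card (sphere24 z \<inter> sphere24 z') \<le> 2"
proof (cases "sphere24 z \<inter> sphere24 z' = {}")
  case True thus ?thesis by simp
next
  case False
  have key: "\<And>y. y \<in> sphere24 z \<inter> sphere24 z' \<Longrightarrow> \<exists>i j. i \<noteq> j \<and> sdf z z' = {i, j} \<and> y = sdf z {i}"
  proof -
    fix y assume "y \<in> sphere24 z \<inter> sphere24 z'"
    then obtain i j where i: "y = sdf z {i}" and j: "y = sdf z' {j}"
      using assms by (auto simp: sphere_eq)
    have e: "sdf z z' = sdf {i} {j}" using i j by (auto simp: sdf_def)
    have "i \<noteq> j" using i j assms(3) by (auto simp: sdf_def)
    hence "sdf z z' = {i, j}" using e by (auto simp: sdf_def)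
    thus "\<exists>i j. i \<noteq> j \<and> sdf z z' = {i, j} \<and> y = sdf z {i}" using \<open>i \<noteq> j\<close> i by blast
  qed
  have sub: "sphere24 z \<inter> sphere24 z' \<subseteq> (\<lambda>i. sdf z {i}) ` sdf z z'"
    using key by fastforce
  from False obtain y where "y \<in> sphere24 z \<inter> sphere24 z'" by auto
  then obtain i j where "i \<noteq> j" "sdf z z' = {i, j}" using key by blast
  hence "card (sdf z z') = 2" by simp
  hence "card ((\<lambda>i. sdf z {i}) ` sdf z z') = 2" by (simp add: card_image inj_sdf)
  thus ?thesis using sub by (metis card_mono finite_imageI card.infinite zero_neq_numeral)
qed


lemma parity_sdf:
  assumes "finite x"
  shows "even (card (sdf x {i})) \<longleftrightarrow> odd (card x)"
proof (cases "i \<in> x")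
  case True
  hence "sdf x {i} = x - {i}" by (auto simp: sdf_def)
  moreover have "card x \<ge> 1" using True assms by (metis One_nat_def Suc_leI card_gt_0_iff empty_iff)
  ultimately show ?thesis using True assms by auto
next
  case False
  hence "sdf x {i} = insert i x" by (auto simp: sdf_def)
  thus ?thesis using False assms by simp
qed

lemma sdf_sdf: "sdf (sdf x A) A = x"
  by (auto simp: sdf_def)

lemma card_V24: "2 * card V24 = 2 ^ 24"
proof -
  define P where "P = Pow {..<(24::nat)}"
  define W where "W = {x\<in>P. odd (card x)}"
  have V: "V24 = {x\<in>P. even (card x)}" by (auto simp: V24_def word24_def P_def)
  have fP: "finite P" by (simp add: P_def)
  have fin: "\<And>x. x \<in> P \<Longrightarrow> finite x" by (auto simp: P_def intro: finite_subset)
  have inP: "\<And>x. x \<in> P \<Longrightarrow> sdf x {0} \<in> P" by (auto simp: P_def sdf_def)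
  have "bij_betw (\<lambda>x. sdf x {0}) V24 W"
  proof (rule bij_betw_byWitness[where f'="\<lambda>x. sdf x {0}"])
    show "\<forall>a\<in>V24. sdf (sdf a {0}) {0} = a" by (simp add: sdf_sdf)
    show "\<forall>a\<in>W. sdf (sdf a {0}) {0} = a" by (simp add: sdf_sdf)
    show "(\<lambda>x. sdf x {0}) ` V24 \<subseteq> W"
      using inP fin parity_sdf by (auto simp: V W_def)
    show "(\<lambda>x. sdf x {0}) ` W \<subseteq> V24"
      using inP fin parity_sdf by (auto simp: V W_def)
  qed
  hence "card V24 = card W" by (rule bij_betw_same_card)
  moreover have "P = V24 \<union> W" "V24 \<inter> W = {}" by (auto simp: V W_def)
  moreover have "card P = 2 ^ 24" by (simp add: P_def card_Pow)
  ultimately show ?thesis using fP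
    by (metis card_Un_disjoint finite_Un mult_2)
qed

lemma finite_V24: "finite V24"
proof -
  have "V24 \<subseteq> Pow {..<24}" by (auto simp: V24_def word24_def)
  thus ?thesis by (rule finite_subset) simp
qed

lemma double_count:
  assumes "C \<subseteq> V24"
  shows "(\<Sum>x\<in>C. card (nbrs24 x - C)) = (\<Sum>y\<in>V24 - C. card (nbrs24 y \<inter> C))"
proof -
  have fC: "finite C" using assms finite_V24 finite_subset by blast
  have fn: "\<And>x. finite (nbrs24 x)" using finite_V24 by (simp add: nbrs24_def)
  have "(\<Sum>x\<in>C. card (nbrs24 x - C)) = card (SIGMA x:C. nbrs24 x - C)"
    using fC fn by (simp add: card_SigmaI)
  also have "(SIGMA x:C. nbrs24 x - C) = (\<lambda>(y,x). (x,y)) ` (SIGMA y:V24 - C. nbrs24 y \<inter> C)"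
    using assms by (auto simp: nbrs24_def adj24_def hdist_sym image_iff)
  also have "card \<dots> = card (SIGMA y:V24 - C. nbrs24 y \<inter> C)"
    by (rule card_image) (auto simp: inj_on_def)
  also have "\<dots> = (\<Sum>y\<in>V24 - C. card (nbrs24 y \<inter> C))"
    using finite_V24 fn by (simp add: card_SigmaI)
  finally show ?thesis .
qed


lemma dvd3: "(16777216::int) * c = 3 * k \<Longrightarrow> 3 dvd c"
proof -
  assume h: "(16777216::int) * c = 3 * k"
  have "c = 3 * (k - 5592405 * c)" using h by simp
  thus "3 dvd c" by (rule dvdI)
qed

theorem lemma8:
  fixes C :: "nat set set" and c :: int
  assumes "union_of_spheres C"
    and "perfect_coloring24 C (20 + c) (256 - c) c (276 - c)"
  shows "3 dvd c \<or> c \<ge> 25"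
proof -
  obtain Z where Zw: "\<And>z. z \<in> Z \<Longrightarrow> word24 z \<and> odd (card z)" and CZ: "C = \<Union> (sphere24 ` Z)"
    using assms(1) by (auto simp: union_of_spheres_def)
  have CV: "C \<subseteq> V24" and inC: "\<And>x. x \<in> C \<Longrightarrow> int (card (nbrs24 x \<inter> C)) = 20 + c \<and> int (card (nbrs24 x - C)) = 256 - c"
    and outC: "\<And>x. x \<in> V24 - C \<Longrightarrow> int (card (nbrs24 x \<inter> C)) = c"
    using assms(2) by (auto simp: perfect_coloring24_def)
  have fn: "\<And>x. finite (nbrs24 x)" using finite_V24 by (simp add: nbrs24_def)
  have fC: "finite C" using CV finite_V24 finite_subset by blast
  show ?thesis
  proof (cases "\<exists>z\<in>Z. \<exists>z'\<in>Z. z \<noteq> z' \<and> sphere24 z \<inter> sphere24 z' \<noteq> {}")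
    case True
    then obtain z z' x where z: "z \<in> Z" "z' \<in> Z" "z \<noteq> z'" "x \<in> sphere24 z" "x \<in> sphere24 z'"
      by blast
    have wz: "word24 z" "odd (card z)" "word24 z'" "odd (card z')" using Zw z by auto
    have fs: "finite (sphere24 z)" "finite (sphere24 z')"
      using card_sphere wz by (metis card.infinite zero_neq_numeral)+
    have i2: "card (sphere24 z \<inter> sphere24 z') \<le> 2" using sphere_inter wz z by blast
    have "card (sphere24 z \<union> sphere24 z') + card (sphere24 z \<inter> sphere24 z') = 48"
      using card_Un_Int[OF fs] card_sphere wz by simp
    hence u: "card (sphere24 z \<union> sphere24 z') \<ge> 46" using i2 by linarith
    have "x \<in> sphere24 z \<union> sphere24 z'" using z by auto
    hence "card ((sphere24 z \<union> sphere24 z') - {x}) \<ge> 45" using u fs by simp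
    moreover have "(sphere24 z \<union> sphere24 z') - {x} \<subseteq> nbrs24 x \<inter> C"
      using sphere_adj[of z x] sphere_adj[of z' x] wz z CZ by auto
    ultimately have "card (nbrs24 x \<inter> C) \<ge> 45"
      by (meson card_mono fn finite_Int le_trans)
    moreover have "x \<in> C" using z CZ by auto
    ultimately have "c \<ge> 25" using inC by fastforce
    thus ?thesis by simp
  next
    case False
    have fZ: "finite Z"
    proof -
      have "Z \<subseteq> Pow {..<24}" using Zw by (auto simp: word24_def)
      thus ?thesis by (rule finite_subset) simp
    qed
    have fsZ: "\<forall>z\<in>Z. finite (sphere24 z)"
      using card_sphere Zw by (metis card.infinite zero_neq_numeral)
    have "card C = (\<Sum>z\<in>Z. card (sphere24 z))"
      unfolding CZ by (rule card_UN_disjoint[OF fZ fsZ]) (use False in blast)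
    also have "\<dots> = 24 * card Z" using card_sphere Zw by simp
    finally have cC: "card C = 24 * card Z" .
    have "int (\<Sum>x\<in>C. card (nbrs24 x - C)) = int (\<Sum>y\<in>V24 - C. card (nbrs24 y \<inter> C))"
      using double_count[OF CV] by simp
    hence "(\<Sum>x\<in>C. int (card (nbrs24 x - C))) = (\<Sum>y\<in>V24 - C. int (card (nbrs24 y \<inter> C)))"
      by simp
    moreover have "(\<Sum>x\<in>C. int (card (nbrs24 x - C))) = (\<Sum>x\<in>C. 256 - c)"
      using inC by (intro sum.cong) auto
    moreover have "(\<Sum>y\<in>V24 - C. int (card (nbrs24 y \<inter> C))) = (\<Sum>y\<in>V24 - C. c)"
      using outC by (intro sum.cong) auto
    ultimately have "(\<Sum>x\<in>C. 256 - c) = (\<Sum>y\<in>V24 - C. c)" by simp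
    hence "int (card C) * (256 - c) = int (card (V24 - C)) * c" by simp
    moreover have "card (V24 - C) = card V24 - card C" using CV fC by (simp add: card_Diff_subset)
    moreover have "card C \<le> card V24" using CV finite_V24 by (simp add: card_mono)
    ultimately have "int (card C) * (256 - c) = (int (card V24) - int (card C)) * c" by simp
    hence e: "256 * int (card C) = int (card V24) * c" by (simp add: algebra_simps)
    have v: "2 * int (card V24) = 16777216" using card_V24 by simp
    have "(16777216::int) * c = 2 * (int (card V24) * c)" using v by simp
    also have "\<dots> = 2 * (256 * int (card C))" using e by simp
    also have "\<dots> = 3 * (4096 * int (card Z))" using cC by simp
    finally have "(16777216::int) * c = 3 * (4096 * int (card Z))" .
    thus ?thesis using dvd3 by blast
  qed
qed

end
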